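(* Let $\mathcal M=(S,L,\tau,\ell)$ be an LMC (possibly with infinitely many states) and $s,t\in S$. Then $d(s,t)<1$ if and only if there is a policy $T$ with $\mathcal R^T_{\mathcal M}((s,t),S^2_1)<1$. In particular, if there is a policy $T$ with $\mathcal R^T_{\mathcal M}((s,t),S^2_0)>0$, then $d(s,t)<1$.
   Context: An LMC $\mathcal M=(S,L,\tau,\ell)$ has a nonempty countable state set $S$, finite label set $L$, finitely-branching transition function $\tau:S\to\mathrm{Distr}(S)$ and labelling $\ell$. The probabilistic bisimilarity distance $d$ is the least fixed point of $\Delta(e)(s,t)=1$ if $\ell(s)\ne\ell(t)$ and $\Delta(e)(s,t)=\min_{\omega\in\Omega(\tau(s),\tau(t))}\sum_{u,v}\omega(u,v)e(u,v)$ otherwise, where $\Omega(\mu,\nu)$ is the set of couplings (distributions on $S\times S$ with marginals $\mu,\nu$). Probabilistic bisimilarity $\sim$ is the largest equivalence $R$ on $S$ such that $(s,t)\in R$ implies $\ell(s)=\ell(t)$ and $\tau(s)(E)=\tau(t)(E)$ for every $R$-class $E$. Partition $S^2$ into $S^2_0=\{(s,t):s\sim t\}$, $S^2_1=\{(s,t):\ell(s)\ne\ell(t)\}$, $S^2_?=S^2\setminus(S^2_0\cup S^2_1)$. A policy is a map $T:S^2_?\to\mathrm{Distr}(S^2)$ with $T(s,t)\in\Omega(\tau(s),\tau(t))$. The Markov chain $\mathcal C^T_{\mathcal M}$ on $S^2$ has every pair in $S^2_0\cup S^2_1$ absorbing and from $(u,v)\in S^2_?$ moves to $(x,y)$ with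 probability $T(u,v)(x,y)$. $\mathcal R^T_{\mathcal M}((s,t),Z)$ is the probability that $\mathcal C^T_{\mathcal M}$ started in $(s,t)$ reaches $Z\subseteq S^2$. *)

theory Defs
  imports "HOL-Probability.Probability"
begin

definition lmc :: "'a set \<Rightarrow> 'l set \<Rightarrow> ('a \<Rightarrow> 'a pmf) \<Rightarrow> ('a \<Rightarrow> 'l) \<Rightarrow> bool" where
  "lmc S L \<tau> lab \<longleftrightarrow> S \<noteq> {} \<and> countable S \<and> finite L \<and> lab ` S \<subseteq> L \<and>
     (\<forall>s\<in>S. finite (set_pmf (\<tau> s)) \<and> set_pmf (\<tau> s) \<subseteq> S)"

definition couplings :: "'a pmf \<Rightarrow> 'a pmf \<Rightarrow> ('a \<times> 'a) pmf set" where
  "couplings \<mu> \<nu> = {\<omega>. map_pmf fst \<omega> = \<mu> \<and> map_pmf snd \<omega> = \<nu>}"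

definition dist_dom :: "'a set \<Rightarrow> ('a \<Rightarrow> 'a \<Rightarrow> real) set" where
  "dist_dom S = {e. \<forall>s t. (s \<in> S \<and> t \<in> S \<longrightarrow> 0 \<le> e s t \<and> e s t \<le> 1) \<and>
                          (\<not> (s \<in> S \<and> t \<in> S) \<longrightarrow> e s t = 0)}"

definition Delta :: "'a set \<Rightarrow> ('a \<Rightarrow> 'a pmf) \<Rightarrow> ('a \<Rightarrow> 'l)
                     \<Rightarrow> ('a \<Rightarrow> 'a \<Rightarrow> real) \<Rightarrow> ('a \<Rightarrow> 'a \<Rightarrow> real)" where
  "Delta S \<tau> lab e = (\<lambda>s t.
     if s \<in> S \<and> t \<in> S then
       (if lab s \<noteq> lab t then 1
        else (INF \<omega>\<in>couplings (\<tau> s) (\<tau> t). measure_pmf.expectation \<omega> (\<lambda>(u, v). e u v)))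
     else 0)"

definition bisim_dist :: "'a set \<Rightarrow> ('a \<Rightarrow> 'a pmf) \<Rightarrow> ('a \<Rightarrow> 'l) \<Rightarrow> ('a \<Rightarrow> 'a \<Rightarrow> real)" where
  "bisim_dist S \<tau> lab = (THE e. e \<in> dist_dom S \<and> Delta S \<tau> lab e = e \<and>
      (\<forall>e'\<in>dist_dom S. Delta S \<tau> lab e' = e' \<longrightarrow> e \<le> e'))"

definition prob_bisim_equiv :: "'a set \<Rightarrow> ('a \<Rightarrow> 'a pmf) \<Rightarrow> ('a \<Rightarrow> 'l) \<Rightarrow> ('a \<times> 'a) set \<Rightarrow> bool" where
  "prob_bisim_equiv S \<tau> lab R \<longleftrightarrow> equiv S R \<and>
     (\<forall>(s, t)\<in>R. lab s = lab t \<and>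
        (\<forall>E\<in>S // R. measure_pmf.prob (\<tau> s) E = measure_pmf.prob (\<tau> t) E))"

definition bisimilarity :: "'a set \<Rightarrow> ('a \<Rightarrow> 'a pmf) \<Rightarrow> ('a \<Rightarrow> 'l) \<Rightarrow> ('a \<times> 'a) set" where
  "bisimilarity S \<tau> lab = (THE R. prob_bisim_equiv S \<tau> lab R \<and>
      (\<forall>R'. prob_bisim_equiv S \<tau> lab R' \<longrightarrow> R' \<subseteq> R))"

definition S2_0 :: "'a set \<Rightarrow> ('a \<Rightarrow> 'a pmf) \<Rightarrow> ('a \<Rightarrow> 'l) \<Rightarrow> ('a \<times> 'a) set" where
  "S2_0 S \<tau> lab = bisimilarity S \<tau> lab"

definition S2_1 :: "'a set \<Rightarrow> ('a \<Rightarrow> 'l) \<Rightarrow> ('a \<times> 'a) set" where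
  "S2_1 S lab = {(s, t). s \<in> S \<and> t \<in> S \<and> lab s \<noteq> lab t}"

definition S2_q :: "'a set \<Rightarrow> ('a \<Rightarrow> 'a pmf) \<Rightarrow> ('a \<Rightarrow> 'l) \<Rightarrow> ('a \<times> 'a) set" where
  "S2_q S \<tau> lab = (S \<times> S) - (S2_0 S \<tau> lab \<union> S2_1 S lab)"

definition policy :: "'a set \<Rightarrow> ('a \<Rightarrow> 'a pmf) \<Rightarrow> ('a \<Rightarrow> 'l) \<Rightarrow> ('a \<times> 'a \<Rightarrow> ('a \<times> 'a) pmf) \<Rightarrow> bool" where
  "policy S \<tau> lab T \<longleftrightarrow> (\<forall>(s, t)\<in>S2_q S \<tau> lab. T (s, t) \<in> couplings (\<tau> s) (\<tau> t))"

definition chain_step :: "'a set \<Rightarrow> ('a \<Rightarrow> 'a pmf) \<Rightarrow> ('a \<Rightarrow> 'l) \<Rightarrow> ('a \<times> 'a \<Rightarrow> ('a \<times> 'a) pmf)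
                          \<Rightarrow> 'a \<times> 'a \<Rightarrow> ('a \<times> 'a) pmf" where
  "chain_step S \<tau> lab T x = (if x \<in> S2_q S \<tau> lab then T x else return_pmf x)"

fun reach_within :: "'a set \<Rightarrow> ('a \<Rightarrow> 'a pmf) \<Rightarrow> ('a \<Rightarrow> 'l) \<Rightarrow> ('a \<times> 'a \<Rightarrow> ('a \<times> 'a) pmf)
                     \<Rightarrow> ('a \<times> 'a) set \<Rightarrow> nat \<Rightarrow> 'a \<times> 'a \<Rightarrow> real" where
  "reach_within S \<tau> lab T Z 0 x = (if x \<in> Z then 1 else 0)"
| "reach_within S \<tau> lab T Z (Suc n) x =
     (if x \<in> Z then 1
      else measure_pmf.expectation (chain_step S \<tau> lab T x) (reach_within S \<tau> lab T Z n))"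

text \<open>Reachability probability R^T((s,t), Z): the probability of eventually reaching Z,
 i.e. the (monotone) limit of the probabilities of reaching Z within n steps.\<close>

definition reach_prob :: "'a set \<Rightarrow> ('a \<Rightarrow> 'a pmf) \<Rightarrow> ('a \<Rightarrow> 'l) \<Rightarrow> ('a \<times> 'a \<Rightarrow> ('a \<times> 'a) pmf)
                          \<Rightarrow> 'a \<times> 'a \<Rightarrow> ('a \<times> 'a) set \<Rightarrow> real" where
  "reach_prob S \<tau> lab T x Z = (SUP n. reach_within S \<tau> lab T Z n x)"

end

theory Submission
  imports Defs
begin


locale LMC =
  fixes S :: "'a set" and L :: "'l set" and \<tau> :: "'a \<Rightarrow> 'a pmf" and lab :: "'a \<Rightarrow> 'l"
  assumes lmc: "lmc S L \<tau> lab"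
begin

lemma supp_fin: "s \<in> S \<Longrightarrow> finite (set_pmf (\<tau> s))"
  using lmc unfolding lmc_def by auto

lemma supp_S: "s \<in> S \<Longrightarrow> set_pmf (\<tau> s) \<subseteq> S"
  using lmc unfolding lmc_def by auto

lemma coupling_set:
  assumes "\<omega> \<in> couplings \<mu> \<nu>"
  shows "set_pmf \<omega> \<subseteq> set_pmf \<mu> \<times> set_pmf \<nu>"
proof
  fix p assume p: "p \<in> set_pmf \<omega>"
  show "p \<in> set_pmf \<mu> \<times> set_pmf \<nu>" using assms p unfolding couplings_def
    by (cases p) (auto, metis fst_conv image_eqI, metis snd_conv image_eqI)
qed

lemma coupling_fin:
  assumes "s \<in> S" "t \<in> S" "\<omega> \<in> couplings (\<tau> s) (\<tau> t)"
  shows "finite (set_pmf \<omega>)"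
  using coupling_set[OF assms(3)] supp_fin[OF assms(1)] supp_fin[OF assms(2)]
  by (meson finite_SigmaI finite_subset)

lemma coupling_in:
  assumes "s \<in> S" "t \<in> S" "\<omega> \<in> couplings (\<tau> s) (\<tau> t)"
  shows "set_pmf \<omega> \<subseteq> S \<times> S"
  using coupling_set[OF assms(3)] supp_S[OF assms(1)] supp_S[OF assms(2)] by blast

lemma couplings_ne: "pair_pmf \<mu> \<nu> \<in> couplings \<mu> \<nu>"
  unfolding couplings_def by (simp add: map_fst_pair_pmf map_snd_pair_pmf)

lemma fin_integrable:
  "finite (set_pmf \<omega>) \<Longrightarrow> integrable (measure_pmf \<omega>) (f :: _ \<Rightarrow> real)"
  by (rule integrable_measure_pmf_finite)

lemma exp_nonneg:
  assumes "\<And>x. x \<in> set_pmf \<omega> \<Longrightarrow> 0 \<le> (f x::real)"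
  shows "0 \<le> measure_pmf.expectation \<omega> f"
  using assms by (intro integral_nonneg_AE) (auto simp: AE_measure_pmf_iff)

lemma exp_le1:
  assumes "finite (set_pmf \<omega>)" "\<And>x. x \<in> set_pmf \<omega> \<Longrightarrow> (f x::real) \<le> 1"
  shows "measure_pmf.expectation \<omega> f \<le> 1"
  using assms by (intro measure_pmf.integral_le_const fin_integrable) (auto simp: AE_measure_pmf_iff)

lemma exp_mono:
  assumes "finite (set_pmf \<omega>)" "\<And>x. x \<in> set_pmf \<omega> \<Longrightarrow> (f x::real) \<le> g x"
  shows "measure_pmf.expectation \<omega> f \<le> measure_pmf.expectation \<omega> g"
  using assms by (intro integral_mono_AE fin_integrable) (auto simp: AE_measure_pmf_iff)

abbreviation "D \<equiv> Delta S \<tau> lab"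
abbreviation "DOM \<equiv> dist_dom S"

lemma dom_nonneg: "e \<in> DOM \<Longrightarrow> 0 \<le> e s t"
  unfolding dist_dom_def by (cases "s \<in> S \<and> t \<in> S") auto

lemma dom_le1: "e \<in> DOM \<Longrightarrow> e s t \<le> 1"
  unfolding dist_dom_def by (cases "s \<in> S \<and> t \<in> S") auto

lemma dom_out: "e \<in> DOM \<Longrightarrow> \<not> (s \<in> S \<and> t \<in> S) \<Longrightarrow> e s t = 0"
  unfolding dist_dom_def by auto

lemma bdd_cpl:
  assumes "e \<in> DOM" "s \<in> S" "t \<in> S"
  shows "bdd_below ((\<lambda>\<omega>. measure_pmf.expectation \<omega> (\<lambda>(u, v). e u v)) ` couplings (\<tau> s) (\<tau> t))"
  by (rule bdd_belowI[where m=0]) (auto intro!: exp_nonneg dom_nonneg[OF assms(1)] split: prod.splits)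

lemma Delta_dom: assumes "e \<in> DOM" shows "D e \<in> DOM"
proof -
  have "0 \<le> D e s t \<and> D e s t \<le> 1" if st: "s \<in> S" "t \<in> S" for s t
  proof (cases "lab s = lab t")
    case True
    let ?f = "\<lambda>\<omega>. measure_pmf.expectation \<omega> (\<lambda>(u, v). e u v)"
    have "0 \<le> (INF \<omega>\<in>couplings (\<tau> s) (\<tau> t). ?f \<omega>)"
      using couplings_ne by (intro cINF_greatest) (auto intro!: exp_nonneg dom_nonneg[OF assms] split: prod.splits)
    moreover have "(INF \<omega>\<in>couplings (\<tau> s) (\<tau> t). ?f \<omega>) \<le> ?f (pair_pmf (\<tau> s) (\<tau> t))"
      by (rule cINF_lower[OF bdd_cpl[OF assms st] couplings_ne])
    moreover have "?f (pair_pmf (\<tau> s) (\<tau> t)) \<le> 1"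
      using coupling_fin[OF st couplings_ne]
      by (intro exp_le1) (auto intro!: dom_le1[OF assms] split: prod.splits)
    ultimately show ?thesis using st True unfolding Delta_def by auto
  qed (auto simp: Delta_def)
  then show ?thesis unfolding dist_dom_def Delta_def by auto
qed

lemma Delta_mono:
  assumes "e \<in> DOM" "e' \<in> DOM" "e \<le> e'"
  shows "D e \<le> D e'"
proof (intro le_funI)
  fix s t show "D e s t \<le> D e' s t"
  proof (cases "s \<in> S \<and> t \<in> S \<and> lab s = lab t")
    case True
    then have st: "s \<in> S" "t \<in> S" by auto
    have "(INF \<omega>\<in>couplings (\<tau> s) (\<tau> t). measure_pmf.expectation \<omega> (\<lambda>(u, v). e u v))
       \<le> (INF \<omega>\<in>couplings (\<tau> s) (\<tau> t). measure_pmf.expectation \<omega> (\<lambda>(u, v). e' u v))"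
    proof (rule cINF_mono)
      show "couplings (\<tau> s) (\<tau> t) \<noteq> {}" using couplings_ne by blast
      show "bdd_below ((\<lambda>\<omega>. measure_pmf.expectation \<omega> (\<lambda>(u, v). e u v)) ` couplings (\<tau> s) (\<tau> t))"
        by (rule bdd_cpl[OF assms(1) st])
      fix \<omega> assume "\<omega> \<in> couplings (\<tau> s) (\<tau> t)"
      then show "\<exists>\<omega>'\<in>couplings (\<tau> s) (\<tau> t). measure_pmf.expectation \<omega>' (\<lambda>(u, v). e u v)
                   \<le> measure_pmf.expectation \<omega> (\<lambda>(u, v). e' u v)"
        using coupling_fin[OF st] assms(3)
        by (intro bexI[of _ \<omega>] exp_mono) (auto simp: le_fun_def split: prod.splits)
    qed
    then show ?thesis using True unfolding Delta_def by auto
  qed (auto simp: Delta_def)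
qed

definition "PF = {e \<in> DOM. D e \<le> e}"
definition "dmin = (\<lambda>s t. INF e\<in>PF. e s t)"
definition "one = (\<lambda>s t. if s \<in> S \<and> t \<in> S then 1 else (0::real))"

lemma one_PF: "one \<in> PF"
proof -
  have od: "one \<in> DOM" unfolding one_def dist_dom_def by auto
  moreover have "D one \<le> one"
  proof (intro le_funI)
    fix s t show "D one s t \<le> one s t"
      using dom_le1[OF Delta_dom[OF od], of s t] unfolding one_def by (auto simp: Delta_def)
  qed
  ultimately show ?thesis unfolding PF_def by auto
qed

lemma PF_bdd: "bdd_below ((\<lambda>e. e s t) ` PF)"
  by (rule bdd_belowI[where m=0]) (auto simp: PF_def intro: dom_nonneg)

lemma dmin_le: "e \<in> PF \<Longrightarrow> dmin \<le> e"
  unfolding dmin_def le_fun_def by (auto intro: cINF_lower[OF PF_bdd])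

lemma dmin_dom: "dmin \<in> DOM"
proof -
  have "0 \<le> dmin s t" for s t
    unfolding dmin_def using one_PF by (intro cINF_greatest) (auto simp: PF_def intro: dom_nonneg)
  moreover have "dmin s t \<le> one s t" for s t using dmin_le[OF one_PF] by (auto simp: le_fun_def)
  moreover have "dmin s t = 0" if "\<not> (s \<in> S \<and> t \<in> S)" for s t
    using \<open>0 \<le> dmin s t\<close> \<open>dmin s t \<le> one s t\<close> that unfolding one_def by auto
  moreover have "dmin s t \<le> 1" for s t
    using \<open>dmin s t \<le> one s t\<close> unfolding one_def by (auto split: if_splits)
  ultimately show ?thesis unfolding dist_dom_def by blast
qed

lemma dmin_PF: "D dmin \<le> dmin"
proof (intro le_funI)
  fix s t
  have "D dmin s t \<le> (INF e\<in>PF. e s t)"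
  proof (rule cINF_greatest)
    show "PF \<noteq> {}" using one_PF by auto
    fix e assume e: "e \<in> PF"
    have "D dmin \<le> D e" using e dmin_dom dmin_le by (intro Delta_mono) (auto simp: PF_def)
    also have "\<dots> \<le> e" using e by (auto simp: PF_def)
    finally show "D dmin s t \<le> e s t" by (auto simp: le_fun_def)
  qed
  then show "D dmin s t \<le> dmin s t" by (simp add: dmin_def)
qed

lemma dmin_fix: "D dmin = dmin"
proof (rule antisym)
  show "D dmin \<le> dmin" by (rule dmin_PF)
  have "D dmin \<in> PF" unfolding PF_def
    using Delta_dom[OF dmin_dom] Delta_mono[OF Delta_dom[OF dmin_dom] dmin_dom dmin_PF] by auto
  then show "dmin \<le> D dmin" by (rule dmin_le)
qed

lemma bisim_dist_eq: "bisim_dist S \<tau> lab = dmin"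
  unfolding bisim_dist_def
proof (rule the_equality)
  show "dmin \<in> DOM \<and> D dmin = dmin \<and> (\<forall>e'\<in>DOM. D e' = e' \<longrightarrow> dmin \<le> e')"
    using dmin_dom dmin_fix dmin_le by (auto simp: PF_def)
  fix e assume e: "e \<in> DOM \<and> D e = e \<and> (\<forall>e'\<in>DOM. D e' = e' \<longrightarrow> e \<le> e')"
  then have "e \<le> dmin" using dmin_dom dmin_fix by auto
  moreover have "dmin \<le> e" using e by (intro dmin_le) (auto simp: PF_def)
  ultimately show "e = dmin" by auto
qed

end


context LMC begin

abbreviation "PBE \<equiv> prob_bisim_equiv S \<tau> lab"

lemma K:
  assumes R: "PBE R" and xy: "(x, y) \<in> R" and ES: "E \<subseteq> S"
    and cl: "\<And>a b. a \<in> E \<Longrightarrow> (a, b) \<in> R \<Longrightarrow> b \<in> E"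
  shows "measure_pmf.prob (\<tau> x) E = measure_pmf.prob (\<tau> y) E"
proof -
  have eq: "equiv S R" using R by (auto simp: prob_bisim_equiv_def)
  have cond: "\<And>s t C. (s, t) \<in> R \<Longrightarrow> C \<in> S // R \<Longrightarrow> measure_pmf.prob (\<tau> s) C = measure_pmf.prob (\<tau> t) C"
    using R unfolding prob_bisim_equiv_def by blast
  have RS: "R \<subseteq> S \<times> S" using eq by (auto simp: equiv_def refl_on_def)
  have xS: "x \<in> S" "y \<in> S" using xy RS by auto
  define F where "F = set_pmf (\<tau> x) \<union> set_pmf (\<tau> y)"
  have finF: "finite F" unfolding F_def using supp_fin xS by auto
  define Q where "Q = (\<lambda>z. R `` {z}) ` (E \<inter> F)"
  have finQ: "finite Q" unfolding Q_def using finF by auto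
  have Qq: "Q \<subseteq> S // R" unfolding Q_def using ES by (auto intro: quotientI)
  have QE: "\<Union>Q \<subseteq> E" unfolding Q_def using cl by auto
  have EQ: "E \<inter> F \<subseteq> \<Union>Q" unfolding Q_def
  proof
    fix z assume z: "z \<in> E \<inter> F"
    then have "(z, z) \<in> R" using eq ES by (auto simp: equiv_def refl_on_def)
    then show "z \<in> \<Union> ((\<lambda>z. R `` {z}) ` (E \<inter> F))" using z by auto
  qed
  have disj: "disjoint_family_on id Q"
    unfolding disjoint_family_on_def using quotient_disj[OF eq] Qq by (metis id_apply subsetD)
  have sum_eq: "measure_pmf.prob (\<tau> w) E = (\<Sum>C\<in>Q. measure_pmf.prob (\<tau> w) C)"
    if w: "set_pmf (\<tau> w) \<subseteq> F" for w
  proof -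
    have "measure_pmf.prob (\<tau> w) E = measure_pmf.prob (\<tau> w) (E \<inter> set_pmf (\<tau> w))"
      by (simp add: measure_Int_set_pmf)
    also have "E \<inter> set_pmf (\<tau> w) = \<Union>Q \<inter> set_pmf (\<tau> w)" using QE EQ w by blast
    also have "measure_pmf.prob (\<tau> w) \<dots> = measure_pmf.prob (\<tau> w) (\<Union>(id ` Q))"
      by (simp add: measure_Int_set_pmf)
    also have "\<dots> = (\<Sum>C\<in>Q. measure_pmf.prob (\<tau> w) (id C))"
      by (rule measure_pmf.finite_measure_finite_Union[OF finQ _ disj]) auto
    finally show ?thesis by simp
  qed
  have "measure_pmf.prob (\<tau> x) E = (\<Sum>C\<in>Q. measure_pmf.prob (\<tau> x) C)"
    by (rule sum_eq) (auto simp: F_def)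
  also have "\<dots> = (\<Sum>C\<in>Q. measure_pmf.prob (\<tau> y) C)"
    using cond[OF xy] Qq by (intro sum.cong) auto
  also have "\<dots> = measure_pmf.prob (\<tau> y) E"
    by (rule sum_eq[symmetric]) (auto simp: F_def)
  finally show ?thesis .
qed

definition "BB = {R. PBE R}"
definition "Rs = (\<Union>BB)\<^sup>+"

lemma Id_BB: "Id_on S \<in> BB"
  unfolding BB_def prob_bisim_equiv_def
  by (auto simp: equiv_def refl_on_def sym_def trans_def)

lemma BB_sub: "R \<in> BB \<Longrightarrow> R \<subseteq> S \<times> S"
  unfolding BB_def prob_bisim_equiv_def equiv_def refl_on_def by auto

lemma U_sub: "\<Union>BB \<subseteq> S \<times> S" using BB_sub by auto

lemma Rs_equiv: "equiv S Rs"
proof -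
  have "Rs \<subseteq> S \<times> S" unfolding Rs_def by (rule trancl_subset_Sigma[OF U_sub])
  moreover have "(x, x) \<in> Rs" if "x \<in> S" for x
    using Id_BB that unfolding Rs_def by blast
  moreover have "sym (\<Union>BB)"
    unfolding BB_def prob_bisim_equiv_def equiv_def sym_def by blast
  then have "sym Rs" unfolding Rs_def by (rule sym_trancl)
  moreover have "trans Rs" unfolding Rs_def by (rule trans_trancl)
  ultimately show ?thesis unfolding equiv_def refl_on_def by blast
qed

lemma Rs_PBE: "PBE Rs"
proof -
  have main: "lab s = lab t \<and> (\<forall>E\<in>S // Rs. measure_pmf.prob (\<tau> s) E = measure_pmf.prob (\<tau> t) E)"
    if st: "(s, t) \<in> Rs" for s t
  proof -
    have stepL: "lab a = lab b \<and> (\<forall>E\<in>S // Rs. measure_pmf.prob (\<tau> a) E = measure_pmf.prob (\<tau> b) E)"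
      if ab: "(a, b) \<in> \<Union>BB" for a b
    proof -
      from ab obtain R where R: "R \<in> BB" "(a, b) \<in> R" by auto
      have l: "lab a = lab b" using R unfolding BB_def prob_bisim_equiv_def by auto
      have "measure_pmf.prob (\<tau> a) E = measure_pmf.prob (\<tau> b) E" if E: "E \<in> S // Rs" for E
      proof (rule K)
        show "PBE R" using R by (auto simp: BB_def)
        show "(a, b) \<in> R" by fact
        show "E \<subseteq> S" using E Rs_equiv by (auto elim!: quotientE simp: equiv_def refl_on_def)
        fix a' b' assume a': "a' \<in> E" and "(a', b') \<in> R"
        then have "(a', b') \<in> Rs" using R unfolding Rs_def by blast
        moreover obtain c where "c \<in> S" "E = Rs `` {c}" using E by (auto elim: quotientE)
        ultimately show "b' \<in> E" using a' Rs_equiv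
          by (metis Image_singleton_iff equiv_class_eq)
      qed
      then show ?thesis using l by auto
    qed
    from st have "(s, t) \<in> (\<Union>BB)\<^sup>+" by (simp add: Rs_def)
    then show ?thesis
    proof (induction rule: trancl_induct)
      case (base y) then show ?case using stepL by blast
    next
      case (step y z) then show ?case using stepL[of y z] by auto
    qed
  qed
  show ?thesis unfolding prob_bisim_equiv_def using Rs_equiv main by auto
qed

lemma bisimilarity_eq: "bisimilarity S \<tau> lab = Rs"
  unfolding bisimilarity_def
proof (rule the_equality)
  show "PBE Rs \<and> (\<forall>R'. PBE R' \<longrightarrow> R' \<subseteq> Rs)"
    using Rs_PBE unfolding Rs_def BB_def by auto
  fix R assume R: "PBE R \<and> (\<forall>R'. PBE R' \<longrightarrow> R' \<subseteq> R)"
  then have "Rs \<subseteq> R" using Rs_PBE by auto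
  moreover have "R \<subseteq> Rs" using R unfolding Rs_def BB_def by auto
  ultimately show "R = Rs" by auto
qed

lemma bisim_PBE: "PBE (S2_0 S \<tau> lab)"
  using Rs_PBE bisimilarity_eq by (simp add: S2_0_def)

lemma PBE_coupling:
  assumes R: "PBE R" and uv: "(u, v) \<in> R"
  shows "\<exists>\<omega>\<in>couplings (\<tau> u) (\<tau> v). set_pmf \<omega> \<subseteq> R"
proof -
  have eq: "equiv S R" using R by (auto simp: prob_bisim_equiv_def)
  have cond: "\<And>s t C. (s, t) \<in> R \<Longrightarrow> C \<in> S // R \<Longrightarrow> measure_pmf.prob (\<tau> s) C = measure_pmf.prob (\<tau> t) C"
    using R unfolding prob_bisim_equiv_def by blast
  have RS: "R \<subseteq> S \<times> S" using eq by (auto simp: equiv_def refl_on_def)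
  have uS: "u \<in> S" "v \<in> S" using uv RS by auto
  have symR: "\<And>a b. (a, b) \<in> R \<Longrightarrow> (b, a) \<in> R" using eq by (auto simp: equiv_def sym_def)
  have trR: "\<And>a b c. (a, b) \<in> R \<Longrightarrow> (b, c) \<in> R \<Longrightarrow> (a, c) \<in> R" using eq
    by (auto simp: equiv_def trans_def)
  have reflR: "\<And>a. a \<in> S \<Longrightarrow> (a, a) \<in> R" using eq by (auto simp: equiv_def refl_on_def)
  let ?P = "\<lambda>a b. (a, b) \<in> R"
  have cls: "R `` {a} \<in> S // R" if "a \<in> S" for a using that by (rule quotientI)
  have ex: "\<exists>b\<in>set_pmf (\<tau> t'). (a, b) \<in> R"
    if ts: "(s', t') \<in> R" and a: "a \<in> set_pmf (\<tau> s')" for s' t' a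
  proof -
    have sS: "s' \<in> S" using ts RS by auto
    have aS: "a \<in> S" using supp_S[OF sS] a by auto
    have "measure_pmf.prob (\<tau> s') (R `` {a}) \<noteq> 0"
      using a reflR[OF aS] by (auto simp: measure_pmf_zero_iff)
    then have "measure_pmf.prob (\<tau> t') (R `` {a}) \<noteq> 0" using cond[OF ts cls[OF aS]] by simp
    then show ?thesis by (auto simp: measure_pmf_zero_iff)
  qed
  have "rel_pmf ?P (\<tau> u) (\<tau> v)"
  proof (subst rel_pmf_iff_measure)
    show "symp ?P" using symR by (auto simp: symp_def)
    show "transp ?P" using trR by (auto simp: transp_def)
    show "rel_set ?P (set_pmf (\<tau> u)) (set_pmf (\<tau> v)) \<and>
      (\<forall>x\<in>set_pmf (\<tau> u). \<forall>y\<in>set_pmf (\<tau> v). (x, y) \<in> R \<longrightarrow>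
          measure_pmf.prob (\<tau> u) {x. (x, y) \<in> R} = measure_pmf.prob (\<tau> v) {y. (x, y) \<in> R})"
    proof (intro conjI ballI impI)
      show "rel_set ?P (set_pmf (\<tau> u)) (set_pmf (\<tau> v))"
        unfolding rel_set_def using ex[OF uv] ex[OF symR[OF uv]] symR by blast
      fix x y assume x: "x \<in> set_pmf (\<tau> u)" and y: "y \<in> set_pmf (\<tau> v)" and xy: "(x, y) \<in> R"
      have xS: "x \<in> S" using xy RS by auto
      have "{x'. (x', y) \<in> R} = R `` {x}" using xy symR trR by blast
      moreover have "{y'. (x, y') \<in> R} = R `` {x}" by auto
      ultimately show "measure_pmf.prob (\<tau> u) {x. (x, y) \<in> R} = measure_pmf.prob (\<tau> v) {y. (x, y) \<in> R}"
        using cond[OF uv cls[OF xS]] by simp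
    qed
  qed
  then obtain pq where "\<And>x y. (x, y) \<in> set_pmf pq \<Longrightarrow> (x, y) \<in> R"
    "map_pmf fst pq = \<tau> u" "map_pmf snd pq = \<tau> v"
    by (erule rel_pmf.cases)
  then show ?thesis unfolding couplings_def by auto
qed

end


context LMC begin

abbreviation "rw T Z n x \<equiv> reach_within S \<tau> lab T Z n x"
abbreviation "rp T x Z \<equiv> reach_prob S \<tau> lab T x Z"

lemma exp01:
  assumes "\<And>y. 0 \<le> (f y::real) \<and> f y \<le> 1"
  shows "0 \<le> measure_pmf.expectation p f \<and> measure_pmf.expectation p f \<le> 1"
proof
  show "0 \<le> measure_pmf.expectation p f" using assms by (intro exp_nonneg) auto
  have "integrable (measure_pmf p) f"
    using assms by (intro measure_pmf.integrable_const_bound[where B=1]) auto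
  then show "measure_pmf.expectation p f \<le> 1"
    using assms by (intro measure_pmf.integral_le_const) auto
qed

lemma integrable01:
  assumes "\<And>y. 0 \<le> (f y::real) \<and> f y \<le> 1"
  shows "integrable (measure_pmf p) f"
  using assms by (intro measure_pmf.integrable_const_bound[where B=1]) auto

lemma rw01: "0 \<le> rw T Z n x \<and> rw T Z n x \<le> 1"
proof (induction n arbitrary: x)
  case 0 then show ?case by simp
next
  case (Suc n) then show ?case using exp01[of "rw T Z n"] by auto
qed

lemma rw_mono: "rw T Z n x \<le> rw T Z (Suc n) x"
proof (induction n arbitrary: x)
  case 0 then show ?case using rw01[of T Z "Suc 0" x] by auto
next
  case (Suc n)
  show ?case
  proof (cases "x \<in> Z")
    case False
    have "measure_pmf.expectation (chain_step S \<tau> lab T x) (rw T Z n)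
       \<le> measure_pmf.expectation (chain_step S \<tau> lab T x) (rw T Z (Suc n))"
      by (intro integral_mono integrable01 rw01 Suc.IH)
    then show ?thesis using False by (metis reach_within.simps(2))
  qed simp
qed

lemma rw_incseq: "incseq (\<lambda>n. rw T Z n x)"
  by (intro incseq_SucI rw_mono)

lemma rw_lim: "(\<lambda>n. rw T Z n x) \<longlonglongrightarrow> rp T x Z"
proof -
  have "(\<lambda>n. rw T Z n x) \<longlonglongrightarrow> (SUP n. rw T Z n x)"
  proof (intro LIMSEQ_incseq_SUP rw_incseq)
    show "bdd_above (range (\<lambda>n. rw T Z n x))"
      using rw01[of T Z _ x] by (intro bdd_aboveI[where M=1]) blast
  qed
  then show ?thesis by (simp add: reach_prob_def)
qed

lemma rp01: "0 \<le> rp T x Z \<and> rp T x Z \<le> 1"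
proof
  have a: "\<forall>n. 0 \<le> rw T Z n x" "\<forall>n. rw T Z n x \<le> 1" using rw01[of T Z _ x] by auto
  show "0 \<le> rp T x Z" using a(1) by (intro LIMSEQ_le_const[OF rw_lim]) blast
  show "rp T x Z \<le> 1" using a(2) by (intro LIMSEQ_le_const2[OF rw_lim]) blast
qed

lemma rw_absorb:
  assumes "x \<notin> S2_q S \<tau> lab" "x \<notin> Z"
  shows "rw T Z n x = 0"
  using assms by (induction n) (auto simp: chain_step_def expectation_return_pmf)

lemma rp_absorb:
  assumes "x \<notin> S2_q S \<tau> lab" "x \<notin> Z"
  shows "rp T x Z = 0"
  using rw_absorb[OF assms] by (simp add: reach_prob_def)

lemma rp_Z: "x \<in> Z \<Longrightarrow> rp T x Z = 1"
proof -
  assume "x \<in> Z"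
  then have "rw T Z n x = 1" for n by (cases n) auto
  then show ?thesis by (simp add: reach_prob_def)
qed

lemma rp_eq:
  assumes "x \<in> S2_q S \<tau> lab" "x \<notin> Z" "finite (set_pmf (T x))"
  shows "rp T x Z = measure_pmf.expectation (T x) (\<lambda>y. rp T y Z)"
proof -
  let ?A = "set_pmf (T x)"
  have e: "measure_pmf.expectation (T x) f = (\<Sum>a\<in>?A. f a * pmf (T x) a)" for f :: "_ \<Rightarrow> real"
    by (rule integral_measure_pmf_real[OF assms(3)]) (auto simp: set_pmf_eq)
  have "(\<lambda>n. rw T Z (Suc n) x) = (\<lambda>n. (\<Sum>a\<in>?A. rw T Z n a * pmf (T x) a))"
    using assms by (auto simp: chain_step_def e)
  moreover have "(\<lambda>n. (\<Sum>a\<in>?A. rw T Z n a * pmf (T x) a)) \<longlonglongrightarrow> (\<Sum>a\<in>?A. rp T a Z * pmf (T x) a)"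
    by (intro tendsto_intros rw_lim)
  moreover have "(\<lambda>n. rw T Z (Suc n) x) \<longlonglongrightarrow> rp T x Z"
    using rw_lim by (rule LIMSEQ_Suc)
  ultimately have "rp T x Z = (\<Sum>a\<in>?A. rp T a Z * pmf (T x) a)"
    using LIMSEQ_unique by metis
  then show ?thesis by (simp add: e)
qed

lemma rw_disj:
  assumes "Z1 \<inter> Z2 = {}" "Z1 \<inter> S2_q S \<tau> lab = {}" "Z2 \<inter> S2_q S \<tau> lab = {}"
  shows "rw T Z1 n x + rw T Z2 n x \<le> 1"
proof (induction n arbitrary: x)
  case 0 then show ?case using assms by auto
next
  case (Suc n)
  show ?case
  proof (cases "x \<in> Z1")
    case True
    then have "rw T Z2 (Suc n) x = 0" using assms by (intro rw_absorb) auto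
    then show ?thesis using True by simp
  next
    case F1: False
    show ?thesis
    proof (cases "x \<in> Z2")
      case True
      then have "rw T Z1 (Suc n) x = 0" using assms by (intro rw_absorb) auto
      then show ?thesis using True by simp
    next
      case False
      let ?p = "chain_step S \<tau> lab T x"
      have "rw T Z1 (Suc n) x + rw T Z2 (Suc n) x
         = measure_pmf.expectation ?p (\<lambda>y. rw T Z1 n y + rw T Z2 n y)"
        using F1 False by (simp add: Bochner_Integration.integral_add integrable01 rw01)
      also have "\<dots> \<le> 1"
        using Suc rw01 by (intro exp01[THEN conjunct2]) (auto intro: add_nonneg_nonneg)
      finally show ?thesis .
    qed
  qed
qed

lemma rp_disj:
  assumes "Z1 \<inter> Z2 = {}" "Z1 \<inter> S2_q S \<tau> lab = {}" "Z2 \<inter> S2_q S \<tau> lab = {}"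
  shows "rp T x Z1 + rp T x Z2 \<le> 1"
proof -
  have "\<forall>n. rw T Z1 n x + rw T Z2 n x \<le> 1" using rw_disj[OF assms] by blast
  then show ?thesis by (intro LIMSEQ_le_const2[OF tendsto_add[OF rw_lim[of T Z1 x] rw_lim[of T Z2 x]]]) blast
qed

end


lemma subseq_conv:
  fixes g :: "nat \<Rightarrow> 'b \<Rightarrow> real"
  assumes "finite P" "\<And>n p. \<bar>g n p\<bar> \<le> B"
  shows "\<exists>r. strict_mono r \<and> (\<forall>p\<in>P. convergent (\<lambda>n. g (r n) p))"
  using assms(1)
proof induct
  case empty
  show ?case by (rule exI[of _ id]) (auto simp: strict_mono_def)
next
  case (insert p P)
  then obtain r where r: "strict_mono r" "\<forall>q\<in>P. convergent (\<lambda>n. g (r n) q)" by auto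
  have "bounded (range (\<lambda>n. g (r n) p))"
    unfolding bounded_iff using assms(2) by auto
  then obtain l r' where r': "strict_mono r'" "((\<lambda>n. g (r n) p) \<circ> r') \<longlonglongrightarrow> l"
    using bounded_imp_convergent_subsequence by blast
  have sm: "strict_mono (r \<circ> r')" using r(1) r'(1) by (simp add: strict_mono_def)
  have "convergent (\<lambda>n. g ((r \<circ> r') n) q)" if "q \<in> insert p P" for q
  proof (cases "q = p")
    case True then show ?thesis using r'(2) by (auto simp: convergent_def o_def)
  next
    case False
    then have "convergent ((\<lambda>n. g (r n) q) \<circ> r')"
      using that r(2) r'(1) by (intro convergent_subseq_convergent) auto
    then show ?thesis by (simp add: o_def)
  qed
  then show ?case using sm by blast
qed

lemma set_pmf_marg: "set_pmf \<omega> \<subseteq> set_pmf (map_pmf fst \<omega>) \<times> set_pmf (map_pmf snd \<omega>)"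
  by (auto, metis fst_conv image_eqI, metis snd_conv image_eqI)

lemma attain:
  fixes f :: "'b \<times> 'b \<Rightarrow> real"
  assumes finA: "finite (set_pmf \<mu>)" and finB: "finite (set_pmf \<nu>)"
  shows "\<exists>\<omega>\<in>couplings \<mu> \<nu>. measure_pmf.expectation \<omega> f
            = (INF \<omega>\<in>couplings \<mu> \<nu>. measure_pmf.expectation \<omega> f)"
proof -
  define P where "P = set_pmf \<mu> \<times> set_pmf \<nu>"
  have finP: "finite P" unfolding P_def using finA finB by auto
  let ?C = "couplings \<mu> \<nu>"
  let ?\<Phi> = "\<lambda>\<omega>. measure_pmf.expectation \<omega> f"
  define I where "I = (INF \<omega>\<in>?C. ?\<Phi> \<omega>)"
  have setP: "set_pmf \<omega> \<subseteq> P" if "\<omega> \<in> ?C" for \<omega>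
  proof -
    have m: "map_pmf fst \<omega> = \<mu>" "map_pmf snd \<omega> = \<nu>" using that unfolding couplings_def by auto
    show ?thesis using set_pmf_marg[of \<omega>] unfolding P_def m .
  qed
  have expP: "?\<Phi> \<omega> = (\<Sum>p\<in>P. f p * pmf \<omega> p)" if "\<omega> \<in> ?C" for \<omega>
    using setP[OF that] finP by (intro integral_measure_pmf_real) (auto simp: set_pmf_eq)
  have Cne: "?C \<noteq> {}" unfolding couplings_def
    by (auto intro!: exI[of _ "pair_pmf \<mu> \<nu>"] simp: map_fst_pair_pmf map_snd_pair_pmf)
  have lowb: "- (\<Sum>p\<in>P. \<bar>f p\<bar>) \<le> ?\<Phi> \<omega>" if "\<omega> \<in> ?C" for \<omega>
  proof -
    have "- (\<Sum>p\<in>P. \<bar>f p\<bar>) = (\<Sum>p\<in>P. - \<bar>f p\<bar>)" by (simp add: sum_negf)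
    also have "\<dots> \<le> (\<Sum>p\<in>P. f p * pmf \<omega> p)"
    proof (intro sum_mono)
      fix p
      have "\<bar>f p * pmf \<omega> p\<bar> \<le> \<bar>f p\<bar>"
        using pmf_le_1[of \<omega> p] by (simp add: abs_mult mult_left_le)
      then show "- \<bar>f p\<bar> \<le> f p * pmf \<omega> p" by linarith
    qed
    finally show ?thesis using expP[OF that] by simp
  qed
  have bdd: "bdd_below (?\<Phi> ` ?C)" using lowb by (intro bdd_belowI) auto
  have "\<forall>n. \<exists>\<omega>\<in>?C. ?\<Phi> \<omega> < I + 1 / real (Suc n)"
  proof
    fix n
    have "I < I + 1 / real (Suc n)" by simp
    then show "\<exists>\<omega>\<in>?C. ?\<Phi> \<omega> < I + 1 / real (Suc n)"
      unfolding I_def using cINF_less_iff[OF Cne bdd] by blast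
  qed
  then obtain w where w: "\<And>n. w n \<in> ?C" "\<And>n. ?\<Phi> (w n) < I + 1 / real (Suc n)"
    by metis
  have "\<exists>r. strict_mono r \<and> (\<forall>p\<in>P. convergent (\<lambda>n. pmf (w (r n)) p))"
    using subseq_conv[OF finP, of "\<lambda>n p. pmf (w n) p" 1] by (simp add: pmf_le_1)
  then obtain r where r: "strict_mono r" "\<And>p. p \<in> P \<Longrightarrow> convergent (\<lambda>n. pmf (w (r n)) p)" by blast
  define h where "h p = (if p \<in> P then lim (\<lambda>n. pmf (w (r n)) p) else 0)" for p
  have hlim: "(\<lambda>n. pmf (w (r n)) p) \<longlonglongrightarrow> h p" if "p \<in> P" for p
    using r(2)[OF that] that by (simp add: h_def convergent_LIMSEQ_iff)
  have hnn: "0 \<le> h p" for p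
  proof (cases "p \<in> P")
    case True then show ?thesis by (intro LIMSEQ_le_const[OF hlim]) auto
  qed (simp add: h_def)
  have sumw: "\<And>n q. q \<in> ?C \<Longrightarrow> (\<Sum>p\<in>P. pmf q p) = 1"
    using finP setP by (intro sum_pmf_eq_1) auto
  have sumh: "(\<Sum>p\<in>P. h p) = 1"
  proof -
    have "(\<lambda>n. \<Sum>p\<in>P. pmf (w (r n)) p) \<longlonglongrightarrow> (\<Sum>p\<in>P. h p)"
      by (intro tendsto_sum hlim)
    moreover have "(\<lambda>n. \<Sum>p\<in>P. pmf (w (r n)) p) = (\<lambda>n. 1)" using sumw w(1) by auto
    ultimately show ?thesis using LIMSEQ_unique tendsto_const by metis
  qed
  have nn: "(\<integral>\<^sup>+x. ennreal (h x) \<partial>count_space UNIV) = 1"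
  proof -
    have "(\<integral>\<^sup>+x. ennreal (h x) \<partial>count_space UNIV) = (\<Sum>x\<in>P. ennreal (h x))"
      using finP by (intro nn_integral_count_space') (auto simp: h_def)
    also have "\<dots> = ennreal (\<Sum>x\<in>P. h x)" using hnn by (simp add: sum_ennreal)
    finally show ?thesis using sumh by simp
  qed
  define \<omega> where "\<omega> = embed_pmf h"
  have pw: "pmf \<omega> p = h p" for p unfolding \<omega>_def using hnn nn by (rule pmf_embed_pmf)
  have setw: "set_pmf \<omega> \<subseteq> P" by (auto simp: set_pmf_eq pw h_def)
  have meas: "measure_pmf.prob q X = (\<Sum>p\<in>P \<inter> X. pmf q p)" if "set_pmf q \<subseteq> P" for q X
  proof -
    have "measure_pmf.prob q X = measure_pmf.prob q (X \<inter> set_pmf q)" by (simp add: measure_Int_set_pmf)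
    also have "X \<inter> set_pmf q = (P \<inter> X) \<inter> set_pmf q" using that by auto
    also have "measure_pmf.prob q \<dots> = measure_pmf.prob q (P \<inter> X)" by (simp add: measure_Int_set_pmf)
    also have "\<dots> = (\<Sum>p\<in>P \<inter> X. pmf q p)" using finP by (simp add: measure_measure_pmf_finite)
    finally show ?thesis .
  qed
  have marg: "map_pmf g \<omega> = \<rho>" if g: "\<And>n. map_pmf g (w n) = \<rho>" for g :: "'b \<times> 'b \<Rightarrow> 'b" and \<rho>
  proof (rule pmf_eqI)
    fix a
    have "pmf \<rho> a = (\<Sum>p\<in>P \<inter> g -` {a}. pmf (w (r n)) p)" for n
    proof -
      have "pmf \<rho> a = pmf (map_pmf g (w (r n))) a" using g by simp
      also have "\<dots> = measure_pmf.prob (w (r n)) (g -` {a})" by (rule pmf_map)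
      also have "\<dots> = (\<Sum>p\<in>P \<inter> g -` {a}. pmf (w (r n)) p)" by (rule meas[OF setP[OF w(1)]])
      finally show ?thesis .
    qed
    then have "(\<lambda>n. pmf \<rho> a) = (\<lambda>n. \<Sum>p\<in>P \<inter> g -` {a}. pmf (w (r n)) p)" by simp
    moreover have "(\<lambda>n. \<Sum>p\<in>P \<inter> g -` {a}. pmf (w (r n)) p) \<longlonglongrightarrow> (\<Sum>p\<in>P \<inter> g -` {a}. h p)"
      by (intro tendsto_sum hlim) auto
    ultimately have "pmf \<rho> a = (\<Sum>p\<in>P \<inter> g -` {a}. h p)"
      using LIMSEQ_unique tendsto_const by metis
    also have "\<dots> = pmf (map_pmf g \<omega>) a"
      using meas[OF setw] by (simp add: pmf_map pw)
    finally show "pmf (map_pmf g \<omega>) a = pmf \<rho> a" by simp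
  qed
  have wC: "\<omega> \<in> ?C" unfolding couplings_def
    using marg[of fst \<mu>] marg[of snd \<nu>] w(1) unfolding couplings_def by auto
  have "(\<lambda>n. ?\<Phi> (w (r n))) \<longlonglongrightarrow> (\<Sum>p\<in>P. f p * h p)"
    using expP[OF w(1)] by (simp, intro tendsto_intros hlim)
  moreover have "(\<lambda>n. ?\<Phi> (w (r n))) \<longlonglongrightarrow> I"
  proof (rule tendsto_sandwich[where f="\<lambda>n. I" and h="\<lambda>n. I + 1 / real (Suc (r n))"])
    show "\<forall>\<^sub>F n in sequentially. I \<le> ?\<Phi> (w (r n))"
      unfolding I_def using w(1) by (intro always_eventually allI cINF_lower[OF bdd])
    show "\<forall>\<^sub>F n in sequentially. ?\<Phi> (w (r n)) \<le> I + 1 / real (Suc (r n))"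
      using w(2) by (intro always_eventually allI less_imp_le)
    show "(\<lambda>n. I) \<longlonglongrightarrow> I" by simp
    have "(\<lambda>n. 1 / real (Suc n)) \<longlonglongrightarrow> 0" by (rule LIMSEQ_Suc[OF lim_const_over_n[of 1]] | simp add: LIMSEQ_inverse_real_of_nat_add[of 0, simplified] lim_inverse_n')
    then have "(\<lambda>n. 1 / real (Suc (r n))) \<longlonglongrightarrow> 0"
      using LIMSEQ_subseq_LIMSEQ[OF _ r(1)] by (simp add: o_def)
    then show "(\<lambda>n. I + 1 / real (Suc (r n))) \<longlonglongrightarrow> I"
      using tendsto_add[OF tendsto_const[of I]] by fastforce
  qed
  ultimately have "I = (\<Sum>p\<in>P. f p * h p)" using LIMSEQ_unique by metis
  also have "\<dots> = ?\<Phi> \<omega>" using expP[OF wC] by (simp add: pw)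
  finally show ?thesis using wC unfolding I_def by auto
qed



context LMC begin

abbreviation "d \<equiv> dmin"

lemma S2q_sub: "S2_q S \<tau> lab \<subseteq> S \<times> S" by (auto simp: S2_q_def)

lemma S20_lab: "(a, b) \<in> S2_0 S \<tau> lab \<Longrightarrow> lab a = lab b"
  using bisim_PBE unfolding prob_bisim_equiv_def by auto

lemma S20_S21: "S2_0 S \<tau> lab \<inter> S2_1 S lab = {}"
  using S20_lab by (auto simp: S2_1_def)

lemma d_diff: "u \<in> S \<Longrightarrow> v \<in> S \<Longrightarrow> lab u \<noteq> lab v \<Longrightarrow> d u v = 1"
  using fun_cong[OF fun_cong[OF dmin_fix, of u], of v] by (simp add: Delta_def)

lemma dir1:
  assumes st: "s \<in> S" "t \<in> S" and lt: "d s t < 1"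
  shows "\<exists>T. policy S \<tau> lab T \<and> rp T (s, t) (S2_1 S lab) < 1"
proof -
  let ?P = "\<lambda>x \<omega>. \<omega> \<in> couplings (\<tau> (fst x)) (\<tau> (snd x)) \<and>
     measure_pmf.expectation \<omega> (\<lambda>(u, v). d u v) =
     (INF \<omega>\<in>couplings (\<tau> (fst x)) (\<tau> (snd x)). measure_pmf.expectation \<omega> (\<lambda>(u, v). d u v))"
  define T where "T x = (SOME \<omega>. ?P x \<omega>)" for x
  have TP: "?P x (T x)" if "x \<in> S \<times> S" for x
  proof -
    have "\<exists>\<omega>\<in>couplings (\<tau> (fst x)) (\<tau> (snd x)). measure_pmf.expectation \<omega> (\<lambda>(u, v). d u v) =
     (INF \<omega>\<in>couplings (\<tau> (fst x)) (\<tau> (snd x)). measure_pmf.expectation \<omega> (\<lambda>(u, v). d u v))"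
      using that by (intro attain supp_fin) auto
    then have "\<exists>\<omega>. ?P x \<omega>" by blast
    then show ?thesis unfolding T_def by (rule someI_ex)
  qed
  have pol: "policy S \<tau> lab T" unfolding policy_def using TP S2q_sub by fastforce
  have Td: "measure_pmf.expectation (T (u, v)) (\<lambda>(a, b). d a b) = d u v"
    if uv: "(u, v) \<in> S2_q S \<tau> lab" for u v
  proof -
    have S: "u \<in> S" "v \<in> S" and l: "lab u = lab v" using uv by (auto simp: S2_q_def S2_1_def)
    have "d u v = D d u v" using dmin_fix by simp
    also have "\<dots> = (INF \<omega>\<in>couplings (\<tau> u) (\<tau> v). measure_pmf.expectation \<omega> (\<lambda>(a, b). d a b))"
      using S l by (simp add: Delta_def)
    finally show ?thesis using TP[of "(u, v)"] S by simp
  qed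
  have bound: "rw T (S2_1 S lab) n x \<le> (case x of (u, v) \<Rightarrow> d u v)" for n x
  proof (induction n arbitrary: x)
    case 0
    show ?case using d_diff dmin_dom by (cases x) (auto simp: S2_1_def intro: dom_nonneg)
  next
    case (Suc n)
    obtain u v where x: "x = (u, v)" by (cases x)
    show ?case
    proof (cases "x \<in> S2_1 S lab")
      case True then show ?thesis using d_diff x by (auto simp: S2_1_def)
    next
      case F: False
      show ?thesis
      proof (cases "x \<in> S2_q S \<tau> lab")
        case True
        then have S: "u \<in> S" "v \<in> S" using x S2q_sub by auto
        have "rw T (S2_1 S lab) (Suc n) x = measure_pmf.expectation (T x) (rw T (S2_1 S lab) n)"
          using F True by (simp add: chain_step_def)
        also have "\<dots> \<le> measure_pmf.expectation (T x) (\<lambda>(a, b). d a b)"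
          using TP[of x] S x Suc.IH by (intro exp_mono coupling_fin[OF S]) (auto split: prod.splits)
        also have "\<dots> = d u v" using Td True x by simp
        finally show ?thesis using x by simp
      next
        case False
        then show ?thesis using F Suc.IH[of x] by (simp add: chain_step_def expectation_return_pmf)
      qed
    qed
  qed
  have "rp T (s, t) (S2_1 S lab) \<le> d s t"
    using bound[of _ "(s, t)"] by (intro LIMSEQ_le_const2[OF rw_lim]) auto
  then show ?thesis using pol lt by fastforce
qed

lemma dir2:
  assumes st: "s \<in> S" "t \<in> S" and pol: "policy S \<tau> lab T" and lt: "rp T (s, t) (S2_1 S lab) < 1"
  shows "d s t < 1"
proof -
  define e where "e u v = rp T (u, v) (S2_1 S lab)" for u v
  have eout: "e u v = 0" if "\<not> (u \<in> S \<and> v \<in> S)" for u v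
    unfolding e_def using that S2q_sub by (intro rp_absorb) (auto simp: S2_1_def)
  have eD: "e \<in> DOM" unfolding dist_dom_def using rp01 eout by (auto simp: e_def)
  have "D e \<le> e"
  proof (intro le_funI)
    fix u v
    show "D e u v \<le> e u v"
    proof (cases "u \<in> S \<and> v \<in> S")
      case False then show ?thesis using dom_nonneg[OF eD, of u v] unfolding Delta_def by auto
    next
      case S: True
      show ?thesis
      proof (cases "lab u = lab v")
        case False
        then have "(u, v) \<in> S2_1 S lab" using S by (auto simp: S2_1_def)
        then show ?thesis using S False by (simp add: Delta_def e_def rp_Z)
      next
        case l: True
        then have n1: "(u, v) \<notin> S2_1 S lab" by (auto simp: S2_1_def)
        have DI: "D e u v = (INF \<omega>\<in>couplings (\<tau> u) (\<tau> v). measure_pmf.expectation \<omega> (\<lambda>(a, b). e a b))"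
          using S l by (simp add: Delta_def)
        show ?thesis
        proof (cases "(u, v) \<in> S2_q S \<tau> lab")
          case True
          have Tc: "T (u, v) \<in> couplings (\<tau> u) (\<tau> v)" using pol True unfolding policy_def by auto
          have "D e u v \<le> measure_pmf.expectation (T (u, v)) (\<lambda>(a, b). e a b)"
            unfolding DI using S by (intro cINF_lower[OF bdd_cpl[OF eD]] Tc) auto
          also have "\<dots> = e u v"
            unfolding e_def using rp_eq[of "(u, v)" "S2_1 S lab" T, OF True n1 coupling_fin[OF _ _ Tc]] S
            by (simp add: case_prod_beta')
          finally show ?thesis .
        next
          case False
          then have S0: "(u, v) \<in> S2_0 S \<tau> lab" using S n1 by (auto simp: S2_q_def)
          obtain \<omega> where \<omega>: "\<omega> \<in> couplings (\<tau> u) (\<tau> v)" "set_pmf \<omega> \<subseteq> S2_0 S \<tau> lab"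
            using PBE_coupling[OF bisim_PBE S0] by blast
          have e0: "e a b = 0" if "(a, b) \<in> S2_0 S \<tau> lab" for a b
            unfolding e_def using that S20_S21 by (intro rp_absorb) (auto simp: S2_q_def)
          have "D e u v \<le> measure_pmf.expectation \<omega> (\<lambda>(a, b). e a b)"
            unfolding DI using S by (intro cINF_lower[OF bdd_cpl[OF eD]] \<omega>(1)) auto
          also have "\<dots> \<le> measure_pmf.expectation \<omega> (\<lambda>_. 0)"
            using \<omega> e0 S by (intro exp_mono coupling_fin) auto
          also have "\<dots> = e u v" using e0[OF S0] by simp
          finally show ?thesis .
        qed
      qed
    qed
  qed
  then have "d \<le> e" using eD by (intro dmin_le) (auto simp: PF_def)
  then have "d s t \<le> e s t" by (auto simp: le_fun_def)
  then show ?thesis using lt by (simp add: e_def)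
qed

lemma part2:
  assumes "rp T (s, t) (S2_0 S \<tau> lab) > 0"
  shows "rp T (s, t) (S2_1 S lab) < 1"
proof -
  have "rp T (s, t) (S2_1 S lab) + rp T (s, t) (S2_0 S \<tau> lab) \<le> 1"
    using S20_S21 by (intro rp_disj) (auto simp: S2_q_def)
  then show ?thesis using assms by linarith
qed

end

theorem mainTheorem10:
  fixes S :: "'a set" and L :: "'l set" and \<tau> :: "'a \<Rightarrow> 'a pmf" and lab :: "'a \<Rightarrow> 'l"
    and s t :: 'a
  assumes "lmc S L \<tau> lab" and "s \<in> S" and "t \<in> S"
  shows "(bisim_dist S \<tau> lab s t < 1 \<longleftrightarrow>
            (\<exists>T. policy S \<tau> lab T \<and> reach_prob S \<tau> lab T (s, t) (S2_1 S lab) < 1))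
       \<and> ((\<exists>T. policy S \<tau> lab T \<and> reach_prob S \<tau> lab T (s, t) (S2_0 S \<tau> lab) > 0)
            \<longrightarrow> bisim_dist S \<tau> lab s t < 1)"
proof -
  interpret LMC S L \<tau> lab by (rule LMC.intro) (rule assms(1))
  show ?thesis
    using dir1[OF assms(2,3)] dir2[OF assms(2,3)] part2 by (auto simp: bisim_dist_eq)
qed


end
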